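(* Let $a,b$ be positive integers with $\gcd(a,b)=1$. For all $\pi\in\mathcal{D}_{b,-a}(a,b)$, $$\mathrm{word}(\mathrm{G}_{b,a}(\pi))=\mathrm{sw}^+_{b,-a}\circ\mathrm{rev}(\mathrm{word}(\pi)).$$
   Context: Partitions are drawn in English convention in the first quadrant; a partition with at most $a$ parts, each at most $b$, has as frontier a lattice path from $(0,0)$ to $(b,a)$ with unit north (N) and east (E) steps, its diagram consisting of the unit squares above and to the left of the path; $\mathrm{word}(\lambda)\in\{\mathrm{N},\mathrm{E}\}^*$ is the word of this path. $\mathrm{rev}$ reverses a word. The $(b,-a)$-level of a lattice point $(x,y)$ is $by-ax$; a unit square $[x,x+1]\times[y,y+1]$ (any integers $x,y$) has the level of its southeast corner $(x+1,y)$. $\mathcal{D}_{b,-a}(a,b)$ is the set of partitions fitting in the $a\times b$ rectangle whose frontier path visits only lattice points of nonnegative level. The map $\mathrm{G}_{b,a}$: for $\pi\in\mathcal{D}_{b,-a}(a,b)$, its $b$-generators $\beta_1<\beta_2<\cdots<\beta_b$ are the levels of the squares immediately above the $b$ east steps of the frontier path (the square $[x,x+1]\times[y,y+1]$ for an east step from $(x,y)$ to $(x+1,y)$). Let $\Delta^c$ be the finite set of levels of unit squares lying above the line $by=ax$ and below the frontier path of $\pi$. For each $i$ set $g_{b,a}(\beta_i)=|\{\beta_i,\beta_i+1,\ldots,\beta_i+a-1\}\cap\Delta^c|$. Then $\mathrm{G}_{b,a}(\pi)$ is the partition whose $i$-th column has length $g_{b,a}(\beta_i)$ for $1\le i\le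 b$, regarded as fitting in the $a\times b$ rectangle. For a word $w=w_1\cdots w_n$, set $l_0=0$, $l_i=l_{i-1}+b$ if $w_i=\mathrm{N}$, $l_i=l_{i-1}-a$ if $w_i=\mathrm{E}$. $\mathrm{sw}^+_{b,-a}(w)$ is obtained by: for $k=0,-1,-2,\ldots$ and then $k=\ldots,3,2,1$ (all nonpositive values in decreasing order, then all positive values in decreasing order), scan $w$ from left to right and append each $w_i$ ($i\ge1$) with $l_i=k$. *)

theory Defs
  imports Main
begin

datatype step = N | E

text \<open>A partition fitting in the a x b rectangle is represented by its list of
  column lengths (left to right, padded with zeros to exactly b columns).\<close>
definition is_partition_in_box :: "nat \<Rightarrow> nat \<Rightarrow> nat list \<Rightarrow> bool" where
  "is_partition_in_box a b cs \<longleftrightarrow>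
     length cs = b \<and> sorted (rev cs) \<and> (\<forall>c\<in>set cs. c \<le> a)"

text \<open>Frontier word: the path from (0,0) to (b,a); the east step below column i is at
  height a - (i-th column length); the diagram lies above and to the left of the path.\<close>
fun word_aux :: "nat \<Rightarrow> nat \<Rightarrow> nat list \<Rightarrow> step list" where
  "word_aux a h [] = replicate (a - h) N"
| "word_aux a h (c # cs) = replicate ((a - c) - h) N @ [E] @ word_aux a (a - c) cs"

definition word :: "nat \<Rightarrow> nat list \<Rightarrow> step list" where
  "word a cs = word_aux a 0 cs"

definition lvl :: "nat \<Rightarrow> nat \<Rightarrow> int \<Rightarrow> int \<Rightarrow> int" where
  "lvl a b x y = int b * y - int a * x"

definition pt :: "step list \<Rightarrow> nat \<Rightarrow> int \<times> int" where
  "pt w k = (int (count_list (take k w) E), int (count_list (take k w) N))"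

definition Dset :: "nat \<Rightarrow> nat \<Rightarrow> nat list set" where
  "Dset a b = {cs. is_partition_in_box a b cs \<and>
     (\<forall>k\<le>length (word a cs). lvl a b (fst (pt (word a cs) k)) (snd (pt (word a cs) k)) \<ge> 0)}"

fun eheights :: "step list \<Rightarrow> nat list" where
  "eheights [] = []"
| "eheights (N # w) = map Suc (eheights w)"
| "eheights (E # w) = 0 # eheights w"

text \<open>Levels of the squares immediately above the east steps (square [x,x+1]x[y,y+1]
  for the step (x,y)->(x+1,y), level of its SE corner (x+1,y)).\<close>
definition gens :: "nat \<Rightarrow> nat \<Rightarrow> step list \<Rightarrow> int list" where
  "gens a b w = map (\<lambda>x. lvl a b (int x + 1) (int (eheights w ! x))) [0..<length (eheights w)]"

text \<open>Levels of unit squares lying (weakly) above the line by = ax and below the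
  frontier path.\<close>
definition Deltac :: "nat \<Rightarrow> nat \<Rightarrow> step list \<Rightarrow> int set" where
  "Deltac a b w = {lvl a b (int x + 1) y | x y.
      x < length (eheights w) \<and> 0 \<le> y \<and> y < int (eheights w ! x) \<and> lvl a b (int x + 1) y \<ge> 0}"

definition gfun :: "nat \<Rightarrow> nat \<Rightarrow> step list \<Rightarrow> int \<Rightarrow> nat" where
  "gfun a b w \<beta> = card ({\<beta>..\<beta> + int a - 1} \<inter> Deltac a b w)"

definition G :: "nat \<Rightarrow> nat \<Rightarrow> nat list \<Rightarrow> nat list" where
  "G a b cs = map (gfun a b (word a cs)) (sort (gens a b (word a cs)))"

definition levels :: "nat \<Rightarrow> nat \<Rightarrow> step list \<Rightarrow> int list" where
  "levels a b w = map (\<lambda>i. lvl a b (fst (pt w (Suc i))) (snd (pt w (Suc i)))) [0..<length w]"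

text \<open>sw^+_{b,-a}: levels 0,-1,-2,... then ...,2,1. Only levels in [-M,M] with
  M=(a+b)*length w can occur, so the infinite enumeration is truncated there.\<close>
definition sw :: "nat \<Rightarrow> nat \<Rightarrow> step list \<Rightarrow> step list" where
  "sw a b w = (let M = int ((a + b) * length w); l = levels a b w in
     concat (map (\<lambda>k. map (\<lambda>i. w ! i) (filter (\<lambda>i. l ! i = k) [0..<length w]))
       (rev [-M..0] @ rev [1..M])))"

end

theory Submission
  imports Defs
begin



lemma cnt_Suc: "j < length w \<Longrightarrow> count_list (take (Suc j) w) c = count_list (take j w) c + (if w!j = c then 1 else 0)"
  by (simp add: take_Suc_conv_app_nth)

lemma cnt_mono: "j \<le> j' \<Longrightarrow> count_list (take j w) c \<le> count_list (take j' w) c"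
proof -
  assume "j \<le> j'"
  then obtain d where "j' = j + d" by (metis le_add_diff_inverse)
  then show ?thesis by (simp add: take_add)
qed

lemma cnt_ivt: "j1 \<le> j2 \<Longrightarrow> j2 \<le> length w \<Longrightarrow> count_list (take j1 w) c \<le> x \<Longrightarrow> x < count_list (take j2 w) c
  \<Longrightarrow> \<exists>j. j1 \<le> j \<and> j < j2 \<and> w!j = c \<and> count_list (take j w) c = x"
proof (induction j2)
  case 0 then show ?case by simp
next
  case (Suc j2)
  have h: "count_list (take (Suc j2) w) c = count_list (take j2 w) c + (if w!j2 = c then 1 else 0)"
    using Suc.prems cnt_Suc[of j2 w c] by simp
  show ?case
  proof (cases "x < count_list (take j2 w) c")
    case True
    then have "j1 \<le> j2" using Suc.prems cnt_mono[of j2 j1 w c] by (cases "j1 = Suc j2") auto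
    then show ?thesis using Suc True by (metis less_SucI Suc_leD)
  next
    case False
    then have "w!j2 = c" "x = count_list (take j2 w) c" using h Suc.prems(4) by (auto split: if_splits)
    moreover have "j1 \<le> j2" using Suc.prems False \<open>x = _\<close> by (cases "j1 = Suc j2") auto
    ultimately show ?thesis by auto
  qed
qed

lemma eh_len: "length (eheights w) = count_list w E"
  by (induction w rule: eheights.induct) auto

lemma eh_le: "k \<in> set (eheights w) \<Longrightarrow> k \<le> count_list w N"
  by (induction w arbitrary: k rule: eheights.induct) auto

lemma eh_to: "x < length (eheights w) \<Longrightarrow> \<exists>j<length w. w!j = E \<and> count_list (take j w) E = x \<and> count_list (take j w) N = eheights w ! x"
proof (induction w arbitrary: x rule: eheights.induct)
  case 1 then show ?case by simp
next
  case (2 w)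
  then obtain j where "j<length w" "w!j = E \<and> count_list (take j w) E = x \<and> count_list (take j w) N = eheights w ! x" by auto
  then show ?case using 2 by (intro exI[of _ "Suc j"]) auto
next
  case (3 w)
  show ?case
  proof (cases x)
    case 0 then show ?thesis by (intro exI[of _ 0]) auto
  next
    case (Suc x')
    then obtain j where "j<length w" "w!j = E \<and> count_list (take j w) E = x' \<and> count_list (take j w) N = eheights w ! x'" using 3 by auto
    then show ?thesis using Suc by (intro exI[of _ "Suc j"]) auto
  qed
qed

lemma eh_from: "j < length w \<Longrightarrow> w!j = E \<Longrightarrow> count_list (take j w) E < length (eheights w) \<and> eheights w ! (count_list (take j w) E) = count_list (take j w) N"
proof (induction w arbitrary: j rule: eheights.induct)
  case 1 then show ?case by simp
next
  case (2 w)
  then obtain j' where "j = Suc j'" by (cases j) auto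
  then show ?case using 2 by auto
next
  case (3 w)
  then show ?case by (cases j) auto
qed

lemma rep_Suc: "h < A \<Longrightarrow> replicate (A - h) N = N # replicate (A - Suc h) N"
  by (metis Suc_diff_Suc replicate_Suc)

lemma word_aux_N: "h < A \<Longrightarrow> (cs \<noteq> [] \<longrightarrow> h < A - hd cs) \<Longrightarrow> word_aux A h cs = N # word_aux A (Suc h) cs"
proof (cases cs)
  case Nil
  assume "h < A" 
  then show ?thesis using Nil by (simp add: rep_Suc)
next
  case (Cons c cs')
  assume "h < A" "cs \<noteq> [] \<longrightarrow> h < A - hd cs"
  then have "h < A - c" using Cons by simp
  then have "A - c - h = Suc (A - c - Suc h)" by simp
  then show ?thesis using Cons by simp
qed

lemma word_rec: "count_list u N + h = A \<Longrightarrow> word_aux A h (map (\<lambda>k. A - (k + h)) (eheights u)) = u"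
proof (induction u arbitrary: h rule: eheights.induct)
  case 1 then show ?case by simp
next
  case (2 u)
  have IH: "word_aux A (Suc h) (map (\<lambda>k. A - (k + Suc h)) (eheights u)) = u" using 2(1)[of "Suc h"] 2(2) by simp
  have e: "map (\<lambda>k. A - (k + h)) (eheights (N # u)) = map (\<lambda>k. A - (k + Suc h)) (eheights u)" by simp
  have "word_aux A h (map (\<lambda>k. A - (k + Suc h)) (eheights u)) = N # word_aux A (Suc h) (map (\<lambda>k. A - (k + Suc h)) (eheights u))"
  proof (rule word_aux_N)
    show "h < A" using 2 by simp
    show "map (\<lambda>k. A - (k + Suc h)) (eheights u) \<noteq> [] \<longrightarrow> h < A - hd (map (\<lambda>k. A - (k + Suc h)) (eheights u))"
    proof (intro impI)
      assume "map (\<lambda>k. A - (k + Suc h)) (eheights u) \<noteq> []"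
      then obtain k ks where "eheights u = k # ks" by (cases "eheights u") auto
      define c where "c = A - (k + Suc h)"
      have "k \<le> count_list u N" using eh_le[of k u] \<open>eheights u = k # ks\<close> by simp
      then show "h < A - hd (map (\<lambda>k. A - (k + Suc h)) (eheights u))" using 2 \<open>eheights u = k # ks\<close> by simp
    qed
  qed
  then show ?case using IH e by (simp add: o_def)
next
  case (3 u)
  then show ?case by simp
qed

lemma word_reconstruct: "u = word (count_list u N) (map (\<lambda>k. count_list u N - k) (eheights u))"
  using word_rec[of u 0 "count_list u N"] by (simp add: word_def)




lemma sls_eq: "sorted_wrt (<) (xs::'a::linorder list) \<Longrightarrow> sorted_list_of_set (set xs) = xs"
  by (rule sorted_distinct_set_unique) (auto simp: strict_sorted_iff)

lemma eh_sorted: "sorted_wrt (<) (V::int list) \<Longrightarrow>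
  eheights (map f V) = map (\<lambda>t. card {v\<in>set V. v < t \<and> f v = N}) (filter (\<lambda>v. f v = E) V)"
proof (induction V)
  case Nil then show ?case by simp
next
  case (Cons v V)
  have lt: "\<forall>x\<in>set V. v < x" and sV: "sorted_wrt (<) V" using Cons.prems by auto
  have IH: "eheights (map f V) = map (\<lambda>t. card {v\<in>set V. v < t \<and> f v = N}) (filter (\<lambda>v. f v = E) V)"
    using Cons.IH sV by simp
  have nv: "v \<notin> set V" using lt by auto
  show ?case
  proof (cases "f v")
    case N
    have "\<And>t. t \<in> set (filter (\<lambda>v. f v = E) V) \<Longrightarrow>
      card {u\<in>set (v#V). u < t \<and> f u = N} = Suc (card {u\<in>set V. u < t \<and> f u = N})"
    proof -
      fix t assume "t \<in> set (filter (\<lambda>v. f v = E) V)"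
      then have "v < t" using lt by auto
      then have "{u\<in>set (v#V). u < t \<and> f u = N} = insert v {u\<in>set V. u < t \<and> f u = N}" using N by auto
      then show "card {u\<in>set (v#V). u < t \<and> f u = N} = Suc (card {u\<in>set V. u < t \<and> f u = N})"
        using nv by simp
    qed
    then show ?thesis using N IH by (simp cong: map_cong)
  next
    case E
    have z: "{u\<in>set (v#V). u < v \<and> f u = N} = {}" using lt by auto
    have "\<And>t. card {u\<in>set (v#V). u < t \<and> f u = N} = card {u\<in>set V. u < t \<and> f u = N}"
    proof -
      fix t
      have "{u\<in>set (v#V). u < t \<and> f u = N} = {u\<in>set V. u < t \<and> f u = N}" using E by auto
      then show "card {u\<in>set (v#V). u < t \<and> f u = N} = card {u\<in>set V. u < t \<and> f u = N}" by simp
    qed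
    then show ?thesis using E IH z by simp
  qed
qed

lemma distinct_set_single: "distinct xs \<Longrightarrow> set xs = {x} \<Longrightarrow> xs = [x]"
proof (cases xs)
  case Nil
  assume "set xs = {x}" then show ?thesis using Nil by simp
next
  case (Cons y ys)
  assume d: "distinct xs" and s: "set xs = {x}"
  then have "y = x" using Cons by auto
  moreover have "set ys \<subseteq> {x}" "x \<notin> set ys" using d s Cons \<open>y = x\<close> by auto
  then have "set ys = {}" by (auto simp: subset_singleton_iff)
  ultimately show ?thesis using Cons by simp
qed

lemma filter_key: "distinct is \<Longrightarrow> inj_on key (set is) \<Longrightarrow>
  filter (\<lambda>i. key i = k) is = (if k \<in> key ` set is then [the_inv_into (set is) key k] else [])"
proof (cases "k \<in> key ` set is")
  case True
  assume d: "distinct is" and inj: "inj_on key (set is)"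
  then obtain i0 where i0: "i0 \<in> set is" "k = key i0" using True by auto
  have "set (filter (\<lambda>i. key i = k) is) = {i0}" using i0 inj by (auto simp: inj_on_def)
  moreover have "the_inv_into (set is) key k = i0" using i0 inj by (simp add: the_inv_into_f_f)
  ultimately show ?thesis using True d distinct_set_single[of "filter (\<lambda>i. key i = k) is" i0] by simp
next
  case False
  then show ?thesis by (auto simp: filter_empty_conv)
qed

lemma concat_filter: "distinct is \<Longrightarrow> inj_on key (set is) \<Longrightarrow>
  concat (map (\<lambda>k. map f (filter (\<lambda>i. key i = k) is)) ks) =
  map (\<lambda>k. f (the_inv_into (set is) key k)) (filter (\<lambda>k. k \<in> key ` set is) ks)"
  by (induction ks) (simp_all add: filter_key)

lemma rev_upto: "rev [- int m..0] = map uminus [0..int m]"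
proof (induction m)
  case 0 then show ?case by simp
next
  case (Suc m)
  have "[- int (Suc m)..0] = - int (Suc m) # [- int m..0]"
    by (subst upto_rec1) (auto simp: algebra_simps)
  moreover have "[0..int (Suc m)] = [0..int m] @ [int (Suc m)]"
    by (subst upto_rec2) auto
  ultimately show ?case using Suc by simp
qed

lemma filter_upto_sls: "X \<subseteq> {0..M} \<Longrightarrow> filter (\<lambda>k. k \<in> X) [0..M] = sorted_list_of_set (X::int set)"
proof -
  assume "X \<subseteq> {0..M}"
  then have "set (filter (\<lambda>k. k \<in> X) [0..M]) = X" by auto
  moreover have "sorted_wrt (<) (filter (\<lambda>k. k \<in> X) [0..M])" by (simp add: sorted_wrt_filter)
  ultimately show ?thesis using sls_eq by metis
qed




lemma cnt_sum: "count_list u N + count_list u E = length u"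
proof (induction u)
  case Nil then show ?case by simp
next
  case (Cons s u) then show ?case by (cases s) auto
qed

lemma int_dvd_small: "(a::int) dvd d \<Longrightarrow> \<bar>d\<bar> < a \<Longrightarrow> d = 0"
proof (rule ccontr)
  assume "a dvd d" "\<bar>d\<bar> < a" "d \<noteq> 0"
  then have "\<bar>a\<bar> \<le> \<bar>d\<bar>" using dvd_imp_le_int[of d a] by simp
  then show False using \<open>\<bar>d\<bar> < a\<close> by simp
qed

lemma cop_dvd: "coprime (int a) (int b) \<Longrightarrow> int b * d = int a * e \<Longrightarrow> int a dvd d"
proof -
  assume c: "coprime (int a) (int b)" and e: "int b * d = int a * e"
  then have "int a dvd int b * d" by simp
  then show ?thesis using coprime_dvd_mult_right_iff[OF c] by simp
qed

locale swset =
  fixes a b :: nat and w :: "step list"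
  assumes apos: "0 < a" and bpos: "0 < b" and cop: "coprime a b"
    and cN: "count_list w N = a" and cE: "count_list w E = b"
    and nonneg: "\<forall>k\<le>length w. lvl a b (fst (pt w k)) (snd (pt w k)) \<ge> 0"
begin

definition X :: "nat \<Rightarrow> int" where "X j = int (count_list (take j w) E)"
definition Y :: "nat \<Rightarrow> int" where "Y j = int (count_list (take j w) N)"
definition L :: "nat \<Rightarrow> int" where "L j = int b * Y j - int a * X j"

lemma len: "length w = a + b" using cnt_sum[of w] cN cE by simp

lemma L_nonneg: "k \<le> length w \<Longrightarrow> L k \<ge> 0"
  using nonneg by (auto simp: lvl_def pt_def L_def X_def Y_def)

lemma X_le: "X j \<le> int b" and Y_le: "Y j \<le> int a" and X_ge: "X j \<ge> 0" and Y_ge: "Y j \<ge> 0"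
proof -
  have "count_list (take j w) E \<le> count_list (take (length w) w) E"
    using cnt_mono[of j "length w" w E] by (cases "j \<le> length w") auto
  then show "X j \<le> int b" using cE by (simp add: X_def)
  have "count_list (take j w) N \<le> count_list (take (length w) w) N"
    using cnt_mono[of j "length w" w N] by (cases "j \<le> length w") auto
  then show "Y j \<le> int a" using cN by (simp add: Y_def)
qed (auto simp: X_def Y_def)

lemma XY_Suc: "j < length w \<Longrightarrow> X (Suc j) = X j + (if w!j = E then 1 else 0) \<and> Y (Suc j) = Y j + (if w!j = N then 1 else 0)"
  by (simp add: X_def Y_def cnt_Suc)

lemma XY_len: "j \<le> length w \<Longrightarrow> nat (X j) + nat (Y j) = j"
  using cnt_sum[of "take j w"] by (simp add: X_def Y_def)

lemma X_mono: "j \<le> j' \<Longrightarrow> X j \<le> X j'" by (simp add: X_def cnt_mono)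
lemma Y_mono: "j \<le> j' \<Longrightarrow> Y j \<le> Y j'" by (simp add: Y_def cnt_mono)

lemma copi: "coprime (int a) (int b)" using cop by simp

lemma L_inj: "inj_on L {..<length w}"
proof (rule inj_onI)
  fix j j' assume j: "j \<in> {..<length w}" and j': "j' \<in> {..<length w}" and e: "L j = L j'"
  have eq: "int b * (Y j - Y j') = int a * (X j - X j')" using e unfolding L_def by (simp add: right_diff_distrib)
  then have d: "int a dvd (Y j - Y j')" using cop_dvd[OF copi] by blast
  have jl: "j < length w" "j' < length w" using j j' by auto
  have lenj: "nat (X j) + nat (Y j) = j" "nat (X j') + nat (Y j') = j'" using jl XY_len by auto
  have nf: "\<not> (X j = int b \<and> Y j = int a)" "\<not> (X j' = int b \<and> Y j' = int a)"
  proof -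
    show "\<not> (X j = int b \<and> Y j = int a)"
    proof
      assume "X j = int b \<and> Y j = int a"
      then have "j = b + a" using lenj(1) by simp
      then show False using jl len by simp
    qed
    show "\<not> (X j' = int b \<and> Y j' = int a)"
    proof
      assume "X j' = int b \<and> Y j' = int a"
      then have "j' = b + a" using lenj(2) by simp
      then show False using jl len by simp
    qed
  qed
  show "j = j'"
  proof (cases "Y j = Y j'")
    case True
    then have "X j = X j'" using eq apos by simp
    then have "nat (X j) + nat (Y j) = nat (X j') + nat (Y j')" using True by simp
    then show ?thesis using lenj by simp
  next
    case False
    have ab: "\<bar>Y j - Y j'\<bar> \<le> int a" using Y_le[of j] Y_le[of j'] Y_ge[of j] Y_ge[of j'] by linarith
    have "\<not> \<bar>Y j - Y j'\<bar> < int a" using int_dvd_small[OF d] False by auto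
    then have "Y j - Y j' = int a \<or> Y j' - Y j = int a" using ab by linarith
    then show ?thesis
    proof
      assume h: "Y j - Y j' = int a"
      then have "Y j = int a" "Y j' = 0" using Y_le[of j] Y_le[of j'] Y_ge[of j] Y_ge[of j'] by linarith+
      have "int a * int b = int a * (X j - X j')" using eq h by (simp add: mult.commute)
      then have "X j - X j' = int b" using apos by simp
      then have "X j = int b" using X_le[of j] X_ge[of j'] by linarith
      then show ?thesis using nf \<open>Y j = int a\<close> by simp
    next
      assume h: "Y j' - Y j = int a"
      then have "Y j' = int a" "Y j = 0" using Y_le[of j] Y_le[of j'] Y_ge[of j] Y_ge[of j'] by linarith+
      have "int a * int b = int a * (X j' - X j)" using eq h by (simp add: mult.commute algebra_simps)
      then have "X j' - X j = int b" using apos by simp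
      then have "X j' = int b" using X_le[of j'] X_ge[of j] by linarith
      then show ?thesis using nf \<open>Y j' = int a\<close> by simp
    qed
  qed
qed

definition S where "S = L ` {j. j < length w \<and> w!j = N}"
definition T where "T = L ` {j. j < length w \<and> w!j = E}"

lemma card_idx: "card {j. j < length w \<and> w!j = c} = count_list w c"
  by (simp add: count_list_eq_length_filter length_filter_conv_card eq_commute)

lemma card_S: "card S = a"
proof -
  have "inj_on L {j. j < length w \<and> w!j = N}" using L_inj by (rule inj_on_subset) auto
  then show ?thesis using card_idx[of N] cN by (simp add: S_def card_image)
qed

lemma card_T: "card T = b"
proof -
  have "inj_on L {j. j < length w \<and> w!j = E}" using L_inj by (rule inj_on_subset) auto
  then show ?thesis using card_idx[of E] cE by (simp add: T_def card_image)
qed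

lemma finS: "finite S" and finT: "finite T" by (auto simp: S_def T_def)

lemma Y_N_lt: "j < length w \<Longrightarrow> w!j = N \<Longrightarrow> Y j < int a"
  using XY_Suc[of j] Y_le[of "Suc j"] by simp

lemma S_res: "s \<in> S \<Longrightarrow> s' \<in> S \<Longrightarrow> int a dvd (s - s') \<Longrightarrow> s = s'"
proof -
  assume "s \<in> S" "s' \<in> S" and d: "int a dvd (s - s')"
  then obtain j j' where j: "j < length w" "w!j = N" "s = L j" and j': "j' < length w" "w!j' = N" "s' = L j'"
    by (auto simp: S_def)
  have "s - s' = int b * (Y j - Y j') - int a * (X j - X j')" using j j' by (simp add: L_def algebra_simps)
  then have "int a dvd int b * (Y j - Y j')" using d
  proof -
    have "int b * (Y j - Y j') = (s - s') + int a * (X j - X j')" using \<open>s - s' = _\<close> by simp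
    then show ?thesis using d by (metis dvd_add dvd_triv_left)
  qed
  then have "int a dvd (Y j - Y j')" using copi by (simp add: coprime_dvd_mult_right_iff)
  moreover have "\<bar>Y j - Y j'\<bar> < int a" using Y_N_lt[OF j(1,2)] Y_N_lt[OF j'(1,2)] Y_ge[of j] Y_ge[of j'] by linarith
  ultimately have yy: "Y j = Y j'" using int_dvd_small by fastforce
  have "j = j'"
  proof (rule ccontr)
    assume "j \<noteq> j'"
    then consider "j < j'" | "j' < j" by linarith
    then show False
    proof cases
      case 1
      then have "Y (Suc j) \<le> Y j'" by (intro Y_mono) simp
      then show False using XY_Suc[OF j(1)] j(2) yy by simp
    next
      case 2
      then have "Y (Suc j') \<le> Y j" by (intro Y_mono) simp
      then show False using XY_Suc[OF j'(1)] j'(2) yy by simp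
    qed
  qed
  then show ?thesis using j j' by simp
qed

end



context swset begin

lemma Dc_to: "l \<in> Deltac a b w \<Longrightarrow> 0 \<le> l \<and> (\<exists>s\<in>S. int a dvd (s - l) \<and> l + int a \<le> s)"
proof -
  assume "l \<in> Deltac a b w"
  then obtain x y where xy: "l = lvl a b (int x + 1) y" "x < length (eheights w)" "0 \<le> y" "y < int (eheights w ! x)"
    "lvl a b (int x + 1) y \<ge> 0" unfolding Deltac_def by blast
  obtain j where j: "j < length w" "w!j = E" "count_list (take j w) E = x" "count_list (take j w) N = eheights w ! x"
    using eh_to[OF xy(2)] by blast
  have XYj: "X j = int x" "Y j = int (eheights w ! x)" using j by (simp_all add: X_def Y_def)
  obtain y' where y': "y = int y'" using xy(3) nonneg_int_cases by blast
  have "y' < count_list (take j w) N" using xy(4) j y' by simp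
  then obtain j' where j': "j' < j" "w!j' = N" "count_list (take j' w) N = y'"
    using cnt_ivt[of 0 j w N y'] j by auto
  have "X j' \<le> X j" using j' X_mono by simp
  have Yj': "Y j' = y" using j' y' by (simp add: Y_def)
  define s where "s = L j'"
  have sS: "s \<in> S" unfolding S_def s_def using j' j by auto
  have "s - l = int a * (X j + 1 - X j')" using xy(1) XYj Yj' by (simp add: s_def L_def lvl_def algebra_simps)
  moreover have "X j + 1 - X j' \<ge> 1" using \<open>X j' \<le> X j\<close> by simp
  ultimately have "int a * 1 \<le> int a * (X j + 1 - X j')" by (intro mult_left_mono) auto
  then have "int a dvd (s - l)" "l + int a \<le> s"
    using \<open>s - l = _\<close> by auto
  then show ?thesis using xy sS by auto
qed

lemma Dc_from: "0 \<le> l \<Longrightarrow> s \<in> S \<Longrightarrow> int a dvd (s - l) \<Longrightarrow> l + int a \<le> s \<Longrightarrow> l \<in> Deltac a b w"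
proof -
  assume l0: "0 \<le> l" and sS: "s \<in> S" and d: "int a dvd (s - l)" and le: "l + int a \<le> s"
  obtain j' where j': "j' < length w" "w!j' = N" "s = L j'" using sS by (auto simp: S_def)
  obtain k where k: "s - l = int a * k" using d by (auto elim: dvdE)
  have k1: "k \<ge> 1"
  proof (rule ccontr)
    assume "\<not> k \<ge> 1"
    then have "k \<le> 0" by simp
    then have "int a * k \<le> 0" using apos by (simp add: mult_nonneg_nonpos)
    then show False using k le apos by simp
  qed
  define x where "x = X j' + k - 1"
  have lx: "l = int b * Y j' - int a * (x + 1)" using k j' by (simp add: x_def L_def algebra_simps)
  have Ylt: "Y j' + 1 \<le> int a" using Y_N_lt[OF j'(1,2)] by simp
  have xb: "x + 1 < int b"
  proof (rule ccontr)
    assume "\<not> x + 1 < int b"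
    then have "int a * int b \<le> int a * (x + 1)" using apos by simp
    moreover have "int b * Y j' \<le> int b * (int a - 1)" using Ylt bpos by simp
    ultimately have "l \<le> int b * (int a - 1) - int a * int b" using lx by linarith
    then have "l \<le> - int b" by (simp add: algebra_simps)
    then show False using l0 bpos by simp
  qed
  have x0: "x \<ge> X j'" using k1 by (simp add: x_def)
  have XS: "X (Suc j') = X j'" using XY_Suc[OF j'(1)] j'(2) by simp
  have YS: "Y (Suc j') = Y j' + 1" using XY_Suc[OF j'(1)] j'(2) by simp
  obtain xn where xn: "x = int xn" using x0 X_ge[of j'] by (metis nonneg_int_cases order_trans)
  have "count_list (take (Suc j') w) E \<le> xn" using XS x0 xn by (simp add: X_def)
  moreover have "xn < count_list (take (length w) w) E" using xb xn cE by simp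
  ultimately obtain j where j: "Suc j' \<le> j" "j < length w" "w!j = E" "count_list (take j w) E = xn"
    using cnt_ivt[of "Suc j'" "length w" w E xn] j'(1) by auto
  have eh: "xn < length (eheights w)" "eheights w ! xn = count_list (take j w) N"
    using eh_from[OF j(2,3)] j(4) by auto
  have "Y (Suc j') \<le> Y j" using j Y_mono by simp
  then have yl: "Y j' < int (eheights w ! xn)" using eh YS by (simp add: Y_def)
  have lv: "l = lvl a b (int xn + 1) (Y j')" using lx xn by (simp add: lvl_def)
  show "l \<in> Deltac a b w" unfolding Deltac_def
    using eh(1) yl lv l0 Y_ge[of j'] by blast
qed

lemma Dc_char: "l \<in> Deltac a b w \<longleftrightarrow> 0 \<le> l \<and> (\<exists>s\<in>S. int a dvd (s - l) \<and> l + int a \<le> s)"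
  using Dc_to Dc_from by blast

lemma T_not_S: "t \<in> T \<Longrightarrow> t \<notin> S"
proof
  assume "t \<in> T" "t \<in> S"
  then obtain j j' where "j < length w" "w!j = E" "t = L j" "j' < length w" "w!j' = N" "t = L j'"
    by (auto simp: S_def T_def)
  then show False using L_inj by (metis inj_onD lessThan_iff step.distinct(1))
qed

lemma T_beta: "t \<in> T \<Longrightarrow> t - int a \<ge> 0"
proof -
  assume "t \<in> T"
  then obtain j where j: "j < length w" "w!j = E" "t = L j" by (auto simp: T_def)
  have "L (Suc j) = L j - int a" using XY_Suc[OF j(1)] j(2) by (simp add: L_def algebra_simps)
  then show ?thesis using L_nonneg[of "Suc j"] j by simp
qed

lemma window: "t \<in> T \<Longrightarrow> gfun a b w (t - int a) = card {s\<in>S. t \<le> s}"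
proof -
  assume tT: "t \<in> T"
  define \<beta> where "\<beta> = t - int a"
  have b0: "\<beta> \<ge> 0" using T_beta[OF tT] by (simp add: \<beta>_def)
  define f where "f s = \<beta> + (s - \<beta>) mod int a" for s
  let ?A = "{s\<in>S. t \<le> s}"
  let ?W = "{\<beta>..\<beta> + int a - 1} \<inter> Deltac a b w"
  have ap: "int a > 0" using apos by simp
  have inj: "inj_on f ?A"
  proof (rule inj_onI)
    fix s s' assume "s \<in> ?A" "s' \<in> ?A" "f s = f s'"
    then have "(s - \<beta>) mod int a = (s' - \<beta>) mod int a" by (simp add: f_def)
    then have "int a dvd ((s - \<beta>) - (s' - \<beta>))" by (simp add: mod_eq_dvd_iff)
    then show "s = s'" using S_res \<open>s \<in> ?A\<close> \<open>s' \<in> ?A\<close> by simp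
  qed
  have img: "f ` ?A = ?W"
  proof
    show "f ` ?A \<subseteq> ?W"
    proof
      fix l assume "l \<in> f ` ?A"
      then obtain s where s: "s \<in> S" "t \<le> s" "l = f s" by auto
      have st: "s \<noteq> t" using T_not_S[OF tT] s by auto
      have m0: "0 \<le> (s - \<beta>) mod int a" "(s - \<beta>) mod int a < int a" using ap by simp_all
      have win: "l \<in> {\<beta>..\<beta> + int a - 1}" using m0 s(3) by (simp add: f_def)
      have dv: "int a dvd (s - l)"
      proof -
        have "s - l = (s - \<beta>) - (s - \<beta>) mod int a" using s(3) by (simp add: f_def)
        also have "\<dots> = int a * ((s - \<beta>) div int a)" by (simp add: minus_mod_eq_mult_div)
        finally show ?thesis by simp
      qed
      have "s - l > 0" using s st win \<beta>_def by auto
      then have "s - l \<ge> int a" using dv by (metis dvd_imp_le_int abs_of_pos abs_of_nat less_irrefl)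
      then have "l \<in> Deltac a b w" using Dc_from[OF _ s(1) dv] win b0 by simp
      then show "l \<in> ?W" using win by simp
    qed
    show "?W \<subseteq> f ` ?A"
    proof
      fix l assume lW: "l \<in> ?W"
      then obtain s where s: "s \<in> S" "int a dvd (s - l)" "l + int a \<le> s" using Dc_char by blast
      have "t \<le> s" using s lW \<beta>_def by auto
      have "(s - \<beta>) mod int a = (l - \<beta>) mod int a"
        using s(2) by (metis mod_eq_dvd_iff diff_diff_eq2 diff_add_cancel)
      also have "\<dots> = l - \<beta>" using lW by (intro mod_pos_pos_trivial) auto
      finally have "f s = l" by (simp add: f_def)
      then show "l \<in> f ` ?A" using s \<open>t \<le> s\<close> by auto
    qed
  qed
  have "gfun a b w (t - int a) = card ?W" by (simp add: gfun_def \<beta>_def)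
  also have "\<dots> = card (f ` ?A)" using img by simp
  also have "\<dots> = card ?A" using inj by (simp add: card_image)
  finally show ?thesis .
qed

end



context swset begin

definition stp :: "int \<Rightarrow> step" where "stp v = w ! (the_inv_into {..<length w} L v)"

lemma stp_L: "j < length w \<Longrightarrow> stp (L j) = w ! j"
  using L_inj by (simp add: stp_def the_inv_into_f_f)

lemma cnt_drop: "count_list (drop k w) c = count_list w c - count_list (take k w) c"
  using count_list_append[of "take k w" "drop k w" c] by simp

lemma lev: "i < length w \<Longrightarrow> levels a b (rev w) ! i = - L (length w - Suc i)"
proof -
  assume i: "i < length w"
  let ?k = "length w - Suc i"
  have tk: "take (Suc i) (rev w) = rev (drop ?k w)" by (simp add: take_rev)
  have ce: "count_list (take ?k w) E \<le> count_list w E" "count_list (take ?k w) N \<le> count_list w N"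
    using cnt_mono[of ?k "length w" w] by auto
  have "levels a b (rev w) ! i = lvl a b (int (count_list w E - count_list (take ?k w) E)) (int (count_list w N - count_list (take ?k w) N))"
    using i by (simp add: levels_def pt_def tk cnt_drop)
  also have "\<dots> = int b * (int a - Y ?k) - int a * (int b - X ?k)"
    using ce cN cE by (simp add: lvl_def X_def Y_def of_nat_diff)
  also have "\<dots> = - L ?k" by (simp add: L_def algebra_simps)
  finally show ?thesis .
qed

lemma sw_eq: "sw a b (rev w) = map stp (sorted_list_of_set (L ` {..<length w}))"
proof -
  define n where "n = length w"
  define m where "m = (a + b) * n"
  define M where "M = int m"
  define key where "key i = levels a b (rev w) ! i" for i
  define Lset where "Lset = L ` {..<n}"
  have keyv: "i < n \<Longrightarrow> key i = - L (n - Suc i)" for i using lev by (simp add: key_def n_def)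
  have inj: "inj_on key (set [0..<n])"
  proof (rule inj_onI)
    fix i i' assume "i \<in> set [0..<n]" "i' \<in> set [0..<n]" "key i = key i'"
    then have ii: "i < n" "i' < n" "L (n - Suc i) = L (n - Suc i')" using keyv by auto
    then have "n - Suc i = n - Suc i'" using L_inj by (auto simp: inj_on_def n_def)
    then show "i = i'" using ii by simp
  qed
  have kimg: "key ` set [0..<n] = uminus ` Lset"
  proof
    show "key ` set [0..<n] \<subseteq> uminus ` Lset" using keyv by (auto simp: Lset_def)
    show "uminus ` Lset \<subseteq> key ` set [0..<n]"
    proof
      fix k assume "k \<in> uminus ` Lset"
      then obtain j where j: "j < n" "k = - L j" by (auto simp: Lset_def)
      then have "key (n - Suc j) = k" using keyv[of "n - Suc j"] by (simp add: Suc_diff_Suc)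
      then show "k \<in> key ` set [0..<n]" using j by (intro image_eqI[where x="n - Suc j"]) auto
    qed
  qed
  have Lbd: "Lset \<subseteq> {0..M}"
  proof
    fix v assume "v \<in> Lset"
    then obtain j where j: "j < n" "v = L j" by (auto simp: Lset_def)
    have "v \<ge> 0" using L_nonneg[of j] j by (simp add: n_def)
    moreover have "v \<le> int b * int a"
    proof -
      have "int b * Y j \<le> int b * int a" using Y_le[of j] by (simp add: mult_left_mono)
      moreover have "0 \<le> int a * X j" using X_ge[of j] by simp
      ultimately show ?thesis using j by (simp add: L_def)
    qed
    moreover have "int b * int a \<le> M" unfolding M_def m_def n_def len
      by (simp add: mult_mono)
    ultimately show "v \<in> {0..M}" by simp
  qed
  have f2: "filter (\<lambda>k. k \<in> uminus ` Lset) (rev [1..M]) = []"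
    using Lbd by (auto simp: filter_empty_conv)
  have f1: "filter (\<lambda>k. k \<in> uminus ` Lset) (rev [-M..0]) = map uminus (sorted_list_of_set Lset)"
  proof -
    have "rev [-M..0] = map uminus [0..M]" using rev_upto[of m] by (simp add: M_def)
    then have "filter (\<lambda>k. k \<in> uminus ` Lset) (rev [-M..0]) = map uminus (filter (\<lambda>k. k \<in> Lset) [0..M])"
      by (simp add: filter_map o_def image_iff)
    then show ?thesis using filter_upto_sls[OF Lbd] by simp
  qed
  have sw1: "sw a b (rev w) = concat (map (\<lambda>k. map (\<lambda>i. rev w ! i) (filter (\<lambda>i. key i = k) [0..<n])) (rev [-M..0] @ rev [1..M]))"
    by (simp add: sw_def Let_def key_def M_def m_def n_def)
  also have "\<dots> = map (\<lambda>k. rev w ! (the_inv_into (set [0..<n]) key k)) (filter (\<lambda>k. k \<in> key ` set [0..<n]) (rev [-M..0] @ rev [1..M]))"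
    by (rule concat_filter[OF _ inj]) simp
  also have "\<dots> = map (\<lambda>k. rev w ! (the_inv_into (set [0..<n]) key k)) (map uminus (sorted_list_of_set Lset))"
    using f1 f2 kimg by simp
  also have "\<dots> = map stp (sorted_list_of_set Lset)"
  proof -
    have "rev w ! (the_inv_into (set [0..<n]) key (- v)) = stp v" if "v \<in> Lset" for v
    proof -
      from that obtain j where j: "j < n" "v = L j" unfolding Lset_def by blast
      have kk: "key (n - Suc j) = - v" using keyv[of "n - Suc j"] j by (simp add: Suc_diff_Suc)
      have "the_inv_into (set [0..<n]) key (- v) = n - Suc j"
        using kk j inj by (intro the_inv_into_f_eq) auto
      then show ?thesis using j stp_L[of j] by (simp add: rev_nth n_def Suc_diff_Suc)
    qed
    moreover have "finite Lset" by (simp add: Lset_def)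
    ultimately show ?thesis by (simp add: o_def)
  qed
  finally show ?thesis by (simp add: Lset_def n_def)
qed

end



context swset begin

lemma Lset_stp: "{v \<in> L ` {..<length w}. stp v = c} = L ` {j. j < length w \<and> w!j = c}"
  using stp_L by auto

lemma main: "word a (map (gfun a b w) (sort (gens a b w))) = sw a b (rev w)"
proof -
  define Lset where "Lset = L ` {..<length w}"
  define V where "V = sorted_list_of_set Lset"
  define R where "R = map stp V"
  have finL: "finite Lset" by (simp add: Lset_def)
  have sV: "sorted_wrt (<) V" by (simp add: V_def)
  have setV: "set V = Lset" using finL by (simp add: V_def)
  have SL: "{v\<in>Lset. stp v = N} = S" and TL: "{v\<in>Lset. stp v = E} = T"
    using Lset_stp by (auto simp: Lset_def S_def T_def)
  have ehR: "eheights R = map (\<lambda>t. card {s\<in>S. s < t}) (sorted_list_of_set T)"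
  proof -
    have "eheights R = map (\<lambda>t. card {v\<in>set V. v < t \<and> stp v = N}) (filter (\<lambda>v. stp v = E) V)"
      unfolding R_def using eh_sorted[OF sV] by simp
    moreover have "filter (\<lambda>v. stp v = E) V = sorted_list_of_set T"
    proof -
      have "sorted_wrt (<) (filter (\<lambda>v. stp v = E) V)" using sV by (simp add: sorted_wrt_filter)
      moreover have "set (filter (\<lambda>v. stp v = E) V) = T" using setV TL by auto
      ultimately show ?thesis using sls_eq by metis
    qed
    moreover have "\<And>t. {v\<in>set V. v < t \<and> stp v = N} = {s\<in>S. s < t}" using setV SL by auto
    ultimately show ?thesis by simp
  qed
  have cR: "count_list R N = a"
  proof -
    have "count_list R N = length (filter (\<lambda>v. stp v = N) V)"
      by (simp add: R_def count_list_eq_length_filter filter_map o_def eq_commute)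
    also have "\<dots> = card (set (filter (\<lambda>v. stp v = N) V))"
    proof -
      have "distinct (filter (\<lambda>v. stp v = N) V)" using sV by (simp add: strict_sorted_iff)
      then show ?thesis by (simp only: distinct_card)
    qed
    also have "\<dots> = card S" using setV SL by simp
    finally show ?thesis using card_S by simp
  qed
  have Rw: "R = word a (map (\<lambda>t. a - card {s\<in>S. s < t}) (sorted_list_of_set T))"
    using word_reconstruct[of R] cR ehR by (simp add: o_def)
  have sR: "sw a b (rev w) = R" using sw_eq by (simp add: R_def V_def Lset_def)
  have setg: "set (gens a b w) = (\<lambda>t. t - int a) ` T"
  proof
    show "set (gens a b w) \<subseteq> (\<lambda>t. t - int a) ` T"
    proof
      fix g assume "g \<in> set (gens a b w)"
      then obtain x where x: "x < length (eheights w)" "g = lvl a b (int x + 1) (int (eheights w ! x))"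
        by (auto simp: gens_def)
      obtain j where j: "j < length w" "w!j = E" "count_list (take j w) E = x" "count_list (take j w) N = eheights w ! x"
        using eh_to[OF x(1)] by blast
      have "g = L j - int a" using x j by (simp add: lvl_def L_def X_def Y_def algebra_simps)
      moreover have "L j \<in> T" using j by (auto simp: T_def)
      ultimately show "g \<in> (\<lambda>t. t - int a) ` T" by blast
    qed
    show "(\<lambda>t. t - int a) ` T \<subseteq> set (gens a b w)"
    proof
      fix g assume "g \<in> (\<lambda>t. t - int a) ` T"
      then obtain j where j: "j < length w" "w!j = E" "g = L j - int a" by (auto simp: T_def)
      have e: "count_list (take j w) E < length (eheights w)" "eheights w ! (count_list (take j w) E) = count_list (take j w) N"
        using eh_from[OF j(1,2)] by auto
      have "g = lvl a b (int (count_list (take j w) E) + 1) (int (eheights w ! (count_list (take j w) E)))"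
        using j e by (simp add: lvl_def L_def X_def Y_def algebra_simps)
      then show "g \<in> set (gens a b w)" using e(1) unfolding gens_def by auto
    qed
  qed
  have cardg: "card (set (gens a b w)) = length (gens a b w)"
  proof -
    have "card ((\<lambda>t. t - int a) ` T) = card T" by (simp add: card_image inj_on_def)
    then show ?thesis using setg card_T eh_len[of w] cE by (simp add: gens_def)
  qed
  have dg: "distinct (gens a b w)" using cardg by (rule card_distinct)
  have sortg: "sort (gens a b w) = map (\<lambda>t. t - int a) (sorted_list_of_set T)"
  proof -
    have "sort (gens a b w) = sorted_list_of_set (set (gens a b w))"
      using dg by (simp add: sorted_list_of_set_sort_remdups distinct_remdups_id)
    also have "\<dots> = map (\<lambda>t. t - int a) (sorted_list_of_set T)"
    proof -
      have "sorted_wrt (<) (map (\<lambda>t. t - int a) (sorted_list_of_set T))"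
        by (simp add: sorted_wrt_map)
      moreover have "set (map (\<lambda>t. t - int a) (sorted_list_of_set T)) = set (gens a b w)"
        using setg finT by simp
      ultimately show ?thesis using sls_eq by metis
    qed
    finally show ?thesis .
  qed
  have gval: "t \<in> T \<Longrightarrow> gfun a b w (t - int a) = a - card {s\<in>S. s < t}" for t
  proof -
    assume tT: "t \<in> T"
    have "{s\<in>S. s < t} \<union> {s\<in>S. t \<le> s} = S" by auto
    moreover have "{s\<in>S. s < t} \<inter> {s\<in>S. t \<le> s} = {}" by auto
    ultimately have "card {s\<in>S. s < t} + card {s\<in>S. t \<le> s} = card S"
      using finS card_Un_disjoint[of "{s\<in>S. s < t}" "{s\<in>S. t \<le> s}"] by simp
    then show ?thesis using window[OF tT] card_S by simp
  qed
  have "map (gfun a b w) (sort (gens a b w)) = map (\<lambda>t. a - card {s\<in>S. s < t}) (sorted_list_of_set T)"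
    using sortg gval finT by simp
  then show ?thesis using Rw sR by simp
qed

end



lemma wa_E: "count_list (word_aux a h cs) E = length cs"
  by (induction cs arbitrary: h) auto

lemma cnt_rep: "count_list (replicate n x) x = n"
  by (induction n) auto

lemma wa_N: "(\<forall>c\<in>set cs. c \<le> a \<and> h \<le> a - c) \<Longrightarrow> sorted (rev cs) \<Longrightarrow> h \<le> a \<Longrightarrow>
  count_list (word_aux a h cs) N = a - h"
proof (induction cs arbitrary: h)
  case Nil then show ?case by (simp add: cnt_rep)
next
  case (Cons c cs)
  have s: "sorted (rev cs)" "\<forall>x\<in>set cs. x \<le> c" using Cons.prems(2) by (auto simp: sorted_append)
  have h2: "\<forall>x\<in>set cs. x \<le> a \<and> a - c \<le> a - x" using s(2) Cons.prems(1) by (auto intro: diff_le_mono2)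
  have "count_list (word_aux a (a - c) cs) N = a - (a - c)"
    using Cons.IH[of "a - c"] h2 s(1) by auto
  then show ?case using Cons.prems by (auto simp: cnt_rep)
qed

theorem mainTheorem9:
  fixes a b :: nat and \<pi> :: "nat list"
  assumes "0 < a" and "0 < b" and "gcd a b = 1"
    and "\<pi> \<in> Dset a b"
  shows "word a (G a b \<pi>) = sw a b (rev (word a \<pi>))"
proof -
  have box: "is_partition_in_box a b \<pi>" and nn: "\<forall>k\<le>length (word a \<pi>). lvl a b (fst (pt (word a \<pi>) k)) (snd (pt (word a \<pi>) k)) \<ge> 0"
    using assms(4) by (auto simp: Dset_def)
  have cE: "count_list (word a \<pi>) E = b" using box by (simp add: word_def wa_E is_partition_in_box_def)
  have cN: "count_list (word a \<pi>) N = a" using box by (simp add: word_def wa_N is_partition_in_box_def)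
  interpret swset a b "word a \<pi>"
    using assms(1,2,3) cE cN nn by unfold_locales (auto simp: coprime_iff_gcd_eq_1)
  show ?thesis using main by (simp add: G_def)
qed



end
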